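(* For $0\le r_1,r_2\le n$, $0\le s\le N(r_1,r_2)$ and all $t\in\mathbb C$, $$\lambda_s^{r_1,r_2}(t)=\binom{r_2}{s}^{-1}\sum_{j=0}^s\binom{t}{j}\binom{r_2-t}{s-j}\lambda_s^{r_1,s}(j),\qquad\text{where}\quad \lambda_s^{r_1,s}(j)=(-1)^j\frac{(r_1-s+1)_j}{[n-r_1]_j}.$$
   Context: Let $\Omega$ be a finite set with $|\Omega|=n\ge1$, $G=S(\Omega)$, $X=\mathcal P(\Omega)$, $X_r=\{x\in X:|x|=r\}$, $G$ acting on $L^2(X)$ (complex functions on $X$; $L^2(X_r)$ = functions supported on $X_r$) by $(\rho(g)\psi)(x)=\psi(g^{-1}x)$. For $0\le s\le\min(r,n-r)$, $L^2(X_r)_s$ is the unique irreducible $G$-subspace of $L^2(X_r)$ isomorphic to the irreducible representation associated with the partition $(n-s,s)$. $N(r_1,r_2)=\min(r_1,n-r_1,r_2,n-r_2)$. For $0\le s\le N(r_1,r_2)$, $\Lambda_s^{r_1,r_2}$ is a $G$-equivariant map $L^2(X)\to L^2(X)$ sending $L^2(X_{r_1})_s$ into $L^2(X_{r_2})_s$ and vanishing on its orthogonal complement, with kernel $\lambda$ defined on integers $\max(0,r_2-r_1)\le k\le\min(n-r_1,r_2)$ by $(\Lambda_s^{r_1,r_2}\psi)(x_2)=\sum_{x_1\in X_{r_1}}\lambda(|x_2\setminus x_1|)\psi(x_1)$. The kernel agrees on its domain with a unique polynomial of degree $s$ which is nonzero at $0$; $\Lambda_s^{r_1,r_2}$ is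 normalized so that this polynomial takes the value $1$ at $t=0$, and $\lambda_s^{r_1,r_2}(t)$, $t\in\mathbb C$, denotes this polynomial. Binomials $\binom{t}{j}=[t]_j/j!$ for complex $t$; $[\alpha]_k=\alpha(\alpha-1)\cdots(\alpha-k+1)$, $(\alpha)_k=\alpha(\alpha+1)\cdots(\alpha+k-1)$. *)

theory Defs
  imports "HOL-Computational_Algebra.Polynomial" Complex_Main
begin

text \<open>Omega = {..<n}. Functions on X = Pow Omega are functions nat set => complex.\<close>

definition Xr :: "nat \<Rightarrow> nat \<Rightarrow> nat set set" where
  "Xr n r = {x. x \<subseteq> {..<n} \<and> card x = r}"

definition L2r :: "nat \<Rightarrow> nat \<Rightarrow> (nat set \<Rightarrow> complex) set" where
  "L2r n r = {\<psi>. \<forall>x. x \<notin> Xr n r \<longrightarrow> \<psi> x = 0}"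

definition inner_r :: "nat \<Rightarrow> nat \<Rightarrow> (nat set \<Rightarrow> complex) \<Rightarrow> (nat set \<Rightarrow> complex) \<Rightarrow> complex" where
  "inner_r n r \<psi> \<chi> = (\<Sum>x\<in>Xr n r. \<psi> x * cnj (\<chi> x))"

definition up_op :: "nat \<Rightarrow> nat \<Rightarrow> nat \<Rightarrow> (nat set \<Rightarrow> complex) \<Rightarrow> (nat set \<Rightarrow> complex)" where
  "up_op n s r \<phi> = (\<lambda>x. if x \<in> Xr n r then (\<Sum>y\<in>{y. y \<subseteq> x \<and> card y = s}. \<phi> y) else 0)"

definition Mr :: "nat \<Rightarrow> nat \<Rightarrow> nat \<Rightarrow> (nat set \<Rightarrow> complex) set" where
  "Mr n r s = up_op n s r ` L2r n s"

text \<open>L^2(X_r)_s: the copy of the Specht module S^(n-s,s) inside L^2(X_r),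
  realised as the orthogonal complement of M_{s-1} in M_s.\<close>
definition Vr :: "nat \<Rightarrow> nat \<Rightarrow> nat \<Rightarrow> (nat set \<Rightarrow> complex) set" where
  "Vr n r s = (if s = 0 then Mr n r 0
     else {\<psi> \<in> Mr n r s. \<forall>\<chi>\<in>Mr n r (s - 1). inner_r n r \<psi> \<chi> = 0})"

definition kernel_op :: "nat \<Rightarrow> nat \<Rightarrow> nat \<Rightarrow> (nat \<Rightarrow> complex) \<Rightarrow> (nat set \<Rightarrow> complex) \<Rightarrow> (nat set \<Rightarrow> complex)" where
  "kernel_op n r1 r2 ker \<psi> = (\<lambda>x2. if x2 \<in> Xr n r2
      then (\<Sum>x1\<in>Xr n r1. ker (card (x2 - x1)) * \<psi> x1) else 0)"

definition kernel_ok :: "nat \<Rightarrow> nat \<Rightarrow> nat \<Rightarrow> nat \<Rightarrow> (nat \<Rightarrow> complex) \<Rightarrow> bool" where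
  "kernel_ok n r1 r2 s ker \<longleftrightarrow>
     (\<forall>\<psi>\<in>Vr n r1 s. kernel_op n r1 r2 ker \<psi> \<in> Vr n r2 s) \<and>
     (\<forall>\<psi>\<in>L2r n r1. (\<forall>\<phi>\<in>Vr n r1 s. inner_r n r1 \<psi> \<phi> = 0) \<longrightarrow>
         kernel_op n r1 r2 ker \<psi> = (\<lambda>_. 0))"

definition Nfun :: "nat \<Rightarrow> nat \<Rightarrow> nat \<Rightarrow> nat" where
  "Nfun n r1 r2 = min (min r1 (n - r1)) (min r2 (n - r2))"

definition kdom :: "nat \<Rightarrow> nat \<Rightarrow> nat \<Rightarrow> nat set" where
  "kdom n r1 r2 = {r2 - r1 .. min (n - r1) r2}"

definition lambda_poly :: "nat \<Rightarrow> nat \<Rightarrow> nat \<Rightarrow> nat \<Rightarrow> complex poly" where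
  "lambda_poly n r1 r2 s = (THE p. degree p = s \<and> poly p 0 = 1 \<and>
     (\<exists>ker. kernel_ok n r1 r2 s ker \<and> (\<forall>k\<in>kdom n r1 r2. ker k = poly p (of_nat k))))"

definition lam :: "nat \<Rightarrow> nat \<Rightarrow> nat \<Rightarrow> nat \<Rightarrow> complex \<Rightarrow> complex" where
  "lam n r1 r2 s t = poly (lambda_poly n r1 r2 s) t"

definition falling :: "complex \<Rightarrow> nat \<Rightarrow> complex" where
  "falling a k = (\<Prod>i<k. a - of_nat i)"

end

theory Submission
  imports Defs
begin

lemma MC:
  assumes A: "finite A" and zA: "z \<subseteq> A" and BA: "B \<subseteq> A" and bc: "b \<le> c"
  shows "card {x. z \<subseteq> x \<and> x \<subseteq> A \<and> card x = card z + c \<and> card ((x - z) \<inter> B) = b}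
       = (card (B - z) choose b) * (card (A - z - B) choose (c - b))"
proof -
  let ?S = "{x. z \<subseteq> x \<and> x \<subseteq> A \<and> card x = card z + c \<and> card ((x - z) \<inter> B) = b}"
  let ?U = "{u. u \<subseteq> B - z \<and> card u = b}"
  let ?V = "{v. v \<subseteq> A - z - B \<and> card v = c - b}"
  let ?f = "\<lambda>(u,v). z \<union> u \<union> v"
  have fz: "finite z" using A zA by (rule finite_subset[rotated])
  have inj: "inj_on ?f (?U \<times> ?V)"
  proof (rule inj_onI, clarsimp)
    fix u v u' v'
    assume h: "u \<subseteq> B - z" "v \<subseteq> A - z - B" "u' \<subseteq> B - z" "v' \<subseteq> A - z - B"
      "z \<union> u \<union> v = z \<union> u' \<union> v'"
    have "u = (z \<union> u \<union> v) \<inter> B - z" using h by blast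
    also have "\<dots> = (z \<union> u' \<union> v') \<inter> B - z" using h(5) by simp
    also have "\<dots> = u'" using h by blast
    finally have 1: "u = u'" .
    have "v = (z \<union> u \<union> v) - B - z" using h by blast
    also have "\<dots> = (z \<union> u' \<union> v') - B - z" using h(5) by simp
    also have "\<dots> = v'" using h by blast
    finally show "u = u' \<and> v = v'" using 1 by simp
  qed
  have img: "?S = ?f ` (?U \<times> ?V)"
  proof (rule set_eqI, rule iffI)
    fix x assume x: "x \<in> ?S"
    have fx: "finite x" using A by (rule finite_subset[rotated]) (use x in blast)
    let ?u = "(x - z) \<inter> B" and ?v = "x - z - B"
    have "card x = card z + card ?u + card ?v"
    proof -
      have "x = z \<union> ?u \<union> ?v" using x by blast
      then have "card x = card (z \<union> ?u \<union> ?v)" by simp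
      also have "\<dots> = card (z \<union> ?u) + card ?v"
        using fx fz by (intro card_Un_disjoint) auto
      also have "card (z \<union> ?u) = card z + card ?u"
        using fx fz by (intro card_Un_disjoint) auto
      finally show ?thesis .
    qed
    then have "card ?v = c - b" using x by auto
    then have "(?u, ?v) \<in> ?U \<times> ?V" using x by auto
    moreover have "x = ?f (?u, ?v)" using x by auto
    ultimately show "x \<in> ?f ` (?U \<times> ?V)" by (rule rev_image_eqI)
  next
    fix x assume "x \<in> ?f ` (?U \<times> ?V)"
    then obtain u v where uv: "u \<subseteq> B - z" "card u = b" "v \<subseteq> A - z - B" "card v = c - b"
      and x: "x = z \<union> u \<union> v" by auto
    have fu1: "finite u" using A by (rule finite_subset[rotated]) (use uv BA in blast)
    have fu2: "finite v" using A by (rule finite_subset[rotated]) (use uv in blast)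
    note fu = fu1 fu2
    have "card (z \<union> u) = card z + card u" using uv fz fu by (intro card_Un_disjoint) auto
    moreover have "card (z \<union> u \<union> v) = card (z \<union> u) + card v" using uv fz fu by (intro card_Un_disjoint) auto
    ultimately have "card x = card z + card u + card v" using x by simp
    moreover have "(x - z) \<inter> B = u" using x uv by blast
    ultimately show "x \<in> ?S" using x uv zA BA bc by auto
  qed
  have "card ?S = card (?U \<times> ?V)" unfolding img by (rule card_image[OF inj])
  also have "\<dots> = card ?U * card ?V" by (simp add: card_cartesian_product)
  also have "card ?U = card (B - z) choose b" by (rule n_subsets) (use A BA in \<open>meson finite_Diff finite_subset\<close>)
  also have "card ?V = card (A - z - B) choose (c - b)" by (rule n_subsets) (use A in simp)
  finally show ?thesis .
qed

lemma MCsum: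
  fixes F :: "nat \<Rightarrow> complex"
  assumes A: "finite A" and zA: "z \<subseteq> A" and BA: "B \<subseteq> A"
  shows "(\<Sum>x\<in>{x. z \<subseteq> x \<and> x \<subseteq> A \<and> card x = card z + c}. F (card ((x - z) \<inter> B)))
       = (\<Sum>b\<le>c. of_nat ((card (B - z) choose b) * (card (A - z - B) choose (c - b))) * F b)"
proof -
  let ?S = "{x. z \<subseteq> x \<and> x \<subseteq> A \<and> card x = card z + c}"
  let ?g = "\<lambda>x. card ((x - z) \<inter> B)"
  have fS: "finite ?S" by (rule finite_subset[of _ "Pow A"]) (use A in auto)
  have fz: "finite z" using A zA by (rule finite_subset[rotated])
  have gle: "?g x \<le> c" if "x \<in> ?S" for x
  proof -
    have fx: "finite x" using A by (rule finite_subset[rotated]) (use that in blast)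
    have "?g x \<le> card (x - z)" by (rule card_mono) (use fx in auto)
    also have "card (x - z) = c" using that fz fx by (simp add: card_Diff_subset)
    finally show ?thesis .
  qed
  have "(\<Sum>x\<in>?S. F (?g x)) = (\<Sum>x\<in>?S. \<Sum>b\<le>c. if ?g x = b then F b else 0)"
    by (rule sum.cong) (use gle in auto)
  also have "\<dots> = (\<Sum>b\<le>c. \<Sum>x\<in>?S. if ?g x = b then F b else 0)" by (rule sum.swap)
  also have "\<dots> = (\<Sum>b\<le>c. of_nat (card {x\<in>?S. ?g x = b}) * F b)"
    by (rule sum.cong) (use fS in \<open>simp_all add: sum.If_cases Collect_conj_eq[symmetric] conj_assoc\<close>)
  also have "\<dots> = (\<Sum>b\<le>c. of_nat ((card (B - z) choose b) * (card (A - z - B) choose (c - b))) * F b)"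
  proof (rule sum.cong)
    fix b assume "b \<in> {..c}"
    then have "card {x\<in>?S. ?g x = b} = (card (B - z) choose b) * (card (A - z - B) choose (c - b))"
      using MC[OF A zA BA, of b c] by (simp add: conj_assoc)
    then show "of_nat (card {x\<in>?S. ?g x = b}) * F b = of_nat ((card (B - z) choose b) * (card (A - z - B) choose (c - b))) * F b" by simp
  qed simp
  finally show ?thesis .
qed

lemma newton_fin:
  fixes w :: "nat \<Rightarrow> complex"
  shows "\<exists>a. \<forall>u\<le>d. w u = (\<Sum>k\<le>d. a k * of_nat (u choose k))"
proof (induction d)
  case 0
  show ?case by (rule exI[of _ "\<lambda>_. w 0"]) simp
next
  case (Suc d)
  then obtain a where a: "\<forall>u\<le>d. w u = (\<Sum>k\<le>d. a k * of_nat (u choose k))" by blast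
  define a' where "a' = a(Suc d := w (Suc d) - (\<Sum>k\<le>d. a k * of_nat (Suc d choose k)))"
  have eq: "(\<Sum>k\<le>Suc d. a' k * of_nat (u choose k)) = (\<Sum>k\<le>d. a k * of_nat (u choose k)) + a' (Suc d) * of_nat (u choose Suc d)" for u
    by (simp add: a'_def)
  show ?case
  proof (rule exI[of _ a'], intro allI impI)
    fix u assume u: "u \<le> Suc d"
    show "w u = (\<Sum>k\<le>Suc d. a' k * of_nat (u choose k))"
    proof (cases "u = Suc d")
      case True
      then show ?thesis unfolding eq by (simp add: a'_def)
    next
      case False
      then have "u \<le> d" using u by simp
      then show ?thesis unfolding eq using a by simp
    qed
  qed
qed

definition pgb :: "complex \<Rightarrow> complex \<Rightarrow> nat \<Rightarrow> complex poly" where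
  "pgb a e k = smult (inverse (fact k)) (\<Prod>i<k. [:a - of_nat i, e:])"

lemma poly_pgb: "poly (pgb a e k) t = (a + e * t) gchoose k"
  by (simp add: pgb_def gbinomial_prod_rev poly_prod atLeast0LessThan field_simps)

lemma pgb_degree:
  assumes "e \<noteq> 0" shows "degree (pgb a e k) = k"
proof -
  have "degree (\<Prod>i<k. [:a - of_nat i, e:]) = (\<Sum>i<k. degree [:a - of_nat i, e:])"
    by (rule degree_prod_eq_sum_degree) (use assms in auto)
  also have "\<dots> = k" using assms by simp
  finally show ?thesis by (simp add: pgb_def)
qed

lemma pgb_lead:
  assumes "e \<noteq> 0" shows "coeff (pgb a e k) k = e ^ k / fact k"
proof -
  have "lead_coeff (\<Prod>i<k. [:a - of_nat i, e:]) = (\<Prod>i<k. lead_coeff [:a - of_nat i, e:])"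
    by (rule lead_coeff_prod)
  also have "\<dots> = e ^ k" using assms by simp
  finally have "lead_coeff (\<Prod>i<k. [:a - of_nat i, e:]) = e ^ k" .
  moreover have "degree (\<Prod>i<k. [:a - of_nat i, e:]) = k"
    using pgb_degree[OF assms, of a k] by (simp add: pgb_def)
  ultimately show ?thesis by (simp add: pgb_def field_simps)
qed

lemma zero_poly_nat:
  fixes p :: "complex poly"
  assumes "finite S" "degree p < card S" "\<forall>u\<in>S. poly p (of_nat u) = 0"
  shows "p = 0"
proof (rule ccontr)
  assume p: "p \<noteq> 0"
  have "of_nat ` S \<subseteq> {x. poly p x = 0}" using assms(3) by auto
  then have "card (of_nat ` S :: complex set) \<le> card {x. poly p x = 0}"
    by (rule card_mono[OF poly_roots_finite[OF p]])
  also have "card (of_nat ` S :: complex set) = card S"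
    by (rule card_image) (simp add: inj_on_def)
  finally show False using card_poly_roots_bound[OF p] assms(2) by simp
qed

lemma newton_poly:
  fixes q :: "complex poly"
  assumes "degree q \<le> d"
  shows "\<exists>a. \<forall>x. poly q x = (\<Sum>k\<le>d. a k * (x gchoose k))"
proof -
  obtain a where a: "\<forall>u\<le>d. poly q (of_nat u) = (\<Sum>k\<le>d. a k * of_nat (u choose k))"
    using newton_fin[where w="\<lambda>u. poly q (of_nat u)" and d=d] by blast
  define Q where "Q = (\<Sum>k\<le>d. smult (a k) (pgb 0 1 k))"
  have pQ: "poly Q x = (\<Sum>k\<le>d. a k * (x gchoose k))" for x
    by (simp add: Q_def poly_sum poly_pgb)
  have dQ: "degree Q \<le> d" unfolding Q_def
    by (rule degree_sum_le) (auto intro: order.trans[OF degree_smult_le] simp: pgb_degree)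
  have "q - Q = 0"
  proof (rule zero_poly_nat[of "{..d}"])
    show "degree (q - Q) < card {..d}" using degree_diff_le[OF assms dQ] by simp
    show "\<forall>u\<in>{..d}. poly (q - Q) (of_nat u) = 0"
      using a by (simp add: pQ binomial_gbinomial)
  qed simp
  then show ?thesis using pQ by (intro exI[of _ a]) simp
qed

lemma Xr_fin: "finite (Xr n r)"
  by (rule finite_subset[of _ "Pow {..<n}"]) (auto simp: Xr_def)

lemma Xr_sub: "x \<in> Xr n r \<Longrightarrow> x \<subseteq> {..<n}" and Xr_card: "x \<in> Xr n r \<Longrightarrow> card x = r"
  by (auto simp: Xr_def)

lemma Xr_finite_el: "x \<in> Xr n r \<Longrightarrow> finite x"
  by (rule finite_subset[of _ "{..<n}"]) (auto simp: Xr_def)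

lemma sub_eq: "x \<in> Xr n r \<Longrightarrow> {y. y \<subseteq> x \<and> card y = k} = {y \<in> Xr n k. y \<subseteq> x}"
  by (auto simp: Xr_def)

lemma sup_eq: "z \<subseteq> {..<n} \<Longrightarrow> card z \<le> r \<Longrightarrow>
   {x \<in> Xr n r. z \<subseteq> x} = {x. z \<subseteq> x \<and> x \<subseteq> {..<n} \<and> card x = card z + (r - card z)}"
  by (auto simp: Xr_def)

lemma L2r_zero: "\<psi> \<in> L2r n r \<Longrightarrow> x \<notin> Xr n r \<Longrightarrow> \<psi> x = 0"
  by (simp add: L2r_def)

lemma up_op_L2r: "up_op n s r \<phi> \<in> L2r n r"
  by (simp add: up_op_def L2r_def)

lemma Mr_L2r: "Mr n r s \<subseteq> L2r n r"
  by (auto simp: Mr_def up_op_L2r)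

lemma Vr_Mr: "Vr n r s \<subseteq> Mr n r s"
  by (auto simp: Vr_def)

lemma up_op_self: "\<phi> \<in> L2r n s \<Longrightarrow> up_op n s s \<phi> = \<phi>"
proof
  fix x assume phi: "\<phi> \<in> L2r n s"
  show "up_op n s s \<phi> x = \<phi> x"
  proof (cases "x \<in> Xr n s")
    case True
    have fx: "finite x" using Xr_finite_el[OF True] .
    have "{y. y \<subseteq> x \<and> card y = s} = {x}"
    proof
      show "{y. y \<subseteq> x \<and> card y = s} \<subseteq> {x}"
      proof
        fix y assume "y \<in> {y. y \<subseteq> x \<and> card y = s}"
        then have "y = x" using True fx card_subset_eq[of x y] by (auto simp: Xr_def)
        then show "y \<in> {x}" by simp
      qed
    qed (use True in \<open>auto simp: Xr_def\<close>)
    then show ?thesis using True by (simp add: up_op_def)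
  next
    case False
    then show ?thesis using phi by (simp add: up_op_def L2r_def)
  qed
qed

lemma inner_cnj: "inner_r n r a b = cnj (inner_r n r b a)"
  by (simp add: inner_r_def mult.commute)

lemma up_op_eval: "x \<in> Xr n r \<Longrightarrow> up_op n s r \<phi> x = (\<Sum>y\<in>{y \<in> Xr n s. y \<subseteq> x}. \<phi> y)"
  by (simp add: up_op_def sub_eq)

lemma Vcrit:
  assumes M: "f \<in> Mr n r s"
    and K: "s > 0 \<Longrightarrow> \<forall>z\<in>Xr n (s - 1). (\<Sum>x\<in>{x \<in> Xr n r. z \<subseteq> x}. f x) = 0"
  shows "f \<in> Vr n r s"
proof (cases "s = 0")
  case True then show ?thesis using M by (simp add: Vr_def)
next
  case False
  have "inner_r n r f \<chi> = 0" if chi: "\<chi> \<in> Mr n r (s - 1)" for \<chi>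
  proof -
    obtain \<chi>0 where c0: "\<chi>0 \<in> L2r n (s - 1)" and c: "\<chi> = up_op n (s - 1) r \<chi>0"
      using chi by (auto simp: Mr_def)
    have "inner_r n r f \<chi> = (\<Sum>x\<in>Xr n r. \<Sum>z\<in>{z \<in> Xr n (s - 1). z \<subseteq> x}. f x * cnj (\<chi>0 z))"
      by (simp add: inner_r_def c up_op_eval sum_distrib_left)
    also have "\<dots> = (\<Sum>z\<in>Xr n (s - 1). \<Sum>x\<in>{x \<in> Xr n r. z \<subseteq> x}. f x * cnj (\<chi>0 z))"
      by (rule sum.swap_restrict) (simp_all add: Xr_fin)
    also have "\<dots> = (\<Sum>z\<in>Xr n (s - 1). cnj (\<chi>0 z) * (\<Sum>x\<in>{x \<in> Xr n r. z \<subseteq> x}. f x))"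
      by (simp add: sum_distrib_left mult.commute)
    also have "\<dots> = 0" using K False by simp
    finally show ?thesis .
  qed
  then show ?thesis using M False by (simp add: Vr_def)
qed

lemma Vkill:
  assumes phi: "\<phi> \<in> Vr n r s" and s: "s > 0" and z: "z \<in> Xr n (s - 1)"
  shows "(\<Sum>x\<in>{x \<in> Xr n r. z \<subseteq> x}. \<phi> x) = 0"
proof -
  define d where "d = (\<lambda>y. if y = z then (1::complex) else 0)"
  have dL: "d \<in> L2r n (s - 1)" using z by (auto simp: d_def L2r_def)
  have "up_op n (s - 1) r d \<in> Mr n r (s - 1)" using dL by (auto simp: Mr_def)
  then have "inner_r n r \<phi> (up_op n (s - 1) r d) = 0" using phi s by (simp add: Vr_def)
  moreover have "up_op n (s - 1) r d x = (if z \<subseteq> x then 1 else 0)" if x: "x \<in> Xr n r" for x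
  proof -
    have "up_op n (s - 1) r d x = (\<Sum>y\<in>{y \<in> Xr n (s - 1). y \<subseteq> x}. d y)" by (rule up_op_eval[OF x])
    also have "\<dots> = (if z \<subseteq> x then 1 else 0)"
      using z by (simp add: d_def sum.delta' Xr_fin)
    finally show ?thesis .
  qed
  ultimately have "(\<Sum>x\<in>Xr n r. \<phi> x * cnj (if z \<subseteq> x then 1 else 0)) = 0"
    by (simp add: inner_r_def)
  moreover have "cnj (if z \<subseteq> x then 1 else 0) = (if z \<subseteq> x then (1::complex) else 0)" for x by simp
  ultimately have "(\<Sum>x\<in>Xr n r. \<phi> x * (if z \<subseteq> x then 1 else 0)) = 0" by simp
  then show ?thesis by (simp add: sum.inter_filter[symmetric] Xr_fin if_distrib cong: if_cong)
qed

lemma card_split_diff: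
  assumes "finite y" "z \<subseteq> y" "y \<subseteq> A"
  shows "card (y - x) = card (z - x) + card ((y - z) \<inter> (A - x))"
proof -
  have "y - x = (z - x) \<union> ((y - z) \<inter> (A - x))" using assms by blast
  moreover have "finite (z - x)" "finite ((y - z) \<inter> (A - x))" using assms finite_subset by blast+
  ultimately show ?thesis by (simp add: card_Un_disjoint Int_Diff disjoint_iff)
qed

lemma col_sum:
  fixes F :: "nat \<Rightarrow> complex"
  assumes z: "z \<in> Xr n k" and x: "x \<subseteq> {..<n}"
  shows "(\<Sum>y\<in>{y \<in> Xr n (Suc k). z \<subseteq> y}. F (card (y - x)))
     = of_nat (card (x - z)) * F (card (z - x)) + of_nat (card ({..<n} - x - z)) * F (Suc (card (z - x)))"
proof -
  let ?A = "{..<n::nat}"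
  have zA: "z \<subseteq> ?A" and cz: "card z = k" using z by (auto simp: Xr_def)
  have S: "{y \<in> Xr n (Suc k). z \<subseteq> y} = {y. z \<subseteq> y \<and> y \<subseteq> ?A \<and> card y = card z + 1}"
    using sup_eq[OF zA, of "Suc k"] cz by simp
  have "(\<Sum>y\<in>{y \<in> Xr n (Suc k). z \<subseteq> y}. F (card (y - x)))
      = (\<Sum>y\<in>{y. z \<subseteq> y \<and> y \<subseteq> ?A \<and> card y = card z + 1}. (\<lambda>b. F (card (z - x) + b)) (card ((y - z) \<inter> (?A - x))))"
    unfolding S
  proof (rule sum.cong)
    fix y assume y: "y \<in> {y. z \<subseteq> y \<and> y \<subseteq> ?A \<and> card y = card z + 1}"
    have "finite y" using y finite_subset[of y ?A] by auto
    then show "F (card (y - x)) = (\<lambda>b. F (card (z - x) + b)) (card ((y - z) \<inter> (?A - x)))"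
      using card_split_diff[of y z ?A x] y by simp
  qed simp
  also have "\<dots> = (\<Sum>b\<le>1. of_nat ((card (?A - x - z) choose b) * (card (?A - z - (?A - x)) choose (1 - b))) * F (card (z - x) + b))"
    by (rule MCsum) (use zA in auto)
  also have "?A - z - (?A - x) = x - z" using x by blast
  finally show ?thesis by (simp add: atMost_Suc)
qed

lemma DC:
  assumes x: "finite x" "card x = r" and kd: "k \<le> d" "d \<le> r"
  shows "(\<Sum>w\<in>{w. w \<subseteq> x \<and> card w = d}. (of_nat (card (w \<inter> x0) choose k) :: complex))
       = of_nat ((card (x \<inter> x0) choose k) * ((r - k) choose (d - k)))"
proof -
  let ?W = "{w. w \<subseteq> x \<and> card w = d}" and ?V = "{v. v \<subseteq> x \<inter> x0 \<and> card v = k}"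
  have fW: "finite ?W" by (rule finite_subset[of _ "Pow x"]) (use x in auto)
  have fV: "finite ?V" by (rule finite_subset[of _ "Pow x"]) (use x in auto)
  have "(\<Sum>w\<in>?W. (of_nat (card (w \<inter> x0) choose k) :: complex)) = (\<Sum>w\<in>?W. \<Sum>v\<in>{v\<in>?V. v \<subseteq> w}. 1)"
  proof (rule sum.cong)
    fix w assume w: "w \<in> ?W"
    have "finite (w \<inter> x0)" using w x finite_subset by blast
    then have "card {v. v \<subseteq> w \<inter> x0 \<and> card v = k} = card (w \<inter> x0) choose k" by (rule n_subsets)
    moreover have "{v. v \<subseteq> w \<inter> x0 \<and> card v = k} = {v\<in>?V. v \<subseteq> w}" using w by auto
    ultimately show "(of_nat (card (w \<inter> x0) choose k) :: complex) = (\<Sum>v\<in>{v\<in>?V. v \<subseteq> w}. 1)" by simp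
  qed simp
  also have "\<dots> = (\<Sum>v\<in>?V. \<Sum>w\<in>{w\<in>?W. v \<subseteq> w}. 1)"
    by (rule sum.swap_restrict[OF fW fV])
  also have "\<dots> = (\<Sum>v\<in>?V. of_nat ((r - k) choose (d - k)))"
  proof (rule sum.cong)
    fix v assume v: "v \<in> ?V"
    have fv: "finite v" using v x finite_subset by blast
    have cv: "card v = k" using v by simp
    have "{w\<in>?W. v \<subseteq> w} = {w. v \<subseteq> w \<and> w \<subseteq> x \<and> card w = card v + (d - k) \<and> card ((w - v) \<inter> {}) = 0}"
      using v kd by auto
    then have "card {w\<in>?W. v \<subseteq> w} = (card ({} - v) choose 0) * (card (x - v - {}) choose (d - k - 0))"
      using MC[of x v "{}" 0 "d - k"] v x by simp
    also have "card (x - v - {}) = r - k" using v x fv by (simp add: card_Diff_subset)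
    finally show "(\<Sum>w\<in>{w\<in>?W. v \<subseteq> w}. (1::complex)) = of_nat ((r - k) choose (d - k))" by simp
  qed simp
  also have "\<dots> = of_nat (card ?V * ((r - k) choose (d - k)))" by simp
  also have "card ?V = card (x \<inter> x0) choose k" by (rule n_subsets) (use x in simp)
  finally show ?thesis .
qed

lemma PolyM:
  assumes dr: "d \<le> r"
  shows "(\<lambda>x. if x \<in> Xr n r then (\<Sum>k\<le>d. a k * of_nat (card (x \<inter> x0) choose k)) else 0) \<in> Mr n r d"
proof -
  define \<chi> where "\<chi> = (\<lambda>w. if w \<in> Xr n d then
     (\<Sum>k\<le>d. a k / of_nat ((r - k) choose (d - k)) * of_nat (card (w \<inter> x0) choose k)) else (0::complex))"
  have cL: "\<chi> \<in> L2r n d" by (simp add: \<chi>_def L2r_def)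
  have "up_op n d r \<chi> = (\<lambda>x. if x \<in> Xr n r then (\<Sum>k\<le>d. a k * of_nat (card (x \<inter> x0) choose k)) else 0)"
  proof
    fix x show "up_op n d r \<chi> x = (if x \<in> Xr n r then (\<Sum>k\<le>d. a k * of_nat (card (x \<inter> x0) choose k)) else 0)"
    proof (cases "x \<in> Xr n r")
      case True
      have fx: "finite x" "card x = r" using True Xr_finite_el Xr_card by auto
      have "up_op n d r \<chi> x = (\<Sum>w\<in>{w. w \<subseteq> x \<and> card w = d}.
          \<Sum>k\<le>d. a k / of_nat ((r - k) choose (d - k)) * of_nat (card (w \<inter> x0) choose k))"
        using True by (simp add: up_op_def \<chi>_def sub_eq)
      also have "\<dots> = (\<Sum>k\<le>d. a k / of_nat ((r - k) choose (d - k)) *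
          (\<Sum>w\<in>{w. w \<subseteq> x \<and> card w = d}. of_nat (card (w \<inter> x0) choose k)))"
        by (simp add: sum.swap[of _ "{w. w \<subseteq> x \<and> card w = d}"] sum_distrib_left)
      also have "\<dots> = (\<Sum>k\<le>d. a k * of_nat (card (x \<inter> x0) choose k))"
      proof (rule sum.cong)
        fix k assume k: "k \<in> {..d}"
        have nz: "((r - k) choose (d - k)) \<noteq> 0" using k dr by simp
        show "a k / of_nat ((r - k) choose (d - k)) *
          (\<Sum>w\<in>{w. w \<subseteq> x \<and> card w = d}. of_nat (card (w \<inter> x0) choose k)) = a k * of_nat (card (x \<inter> x0) choose k)"
          using DC[OF fx, of k d x0] k dr nz by simp
      qed simp
      finally show ?thesis using True by simp
    qed (simp add: up_op_def)
  qed
  then show ?thesis using cL unfolding Mr_def by (metis image_eqI)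
qed

lemma realize:
  assumes x: "x \<in> Xr n a" and mb: "m \<le> b" and ba: "b - m \<le> a" and mn: "m \<le> n - a"
  shows "\<exists>y\<in>Xr n b. card (y - x) = m \<and> card (x - y) = a - (b - m)"
proof -
  have xA: "x \<subseteq> {..<n}" and cx: "card x = a" using x by (auto simp: Xr_def)
  have fx: "finite x" using x by (rule Xr_finite_el)
  have "b - m \<le> card x" using ba cx by simp
  then obtain u where u: "u \<subseteq> x" "card u = b - m" "finite u"
    by (rule obtain_subset_with_card_n)
  have cAx: "card ({..<n} - x) = n - a" using xA cx fx by (simp add: card_Diff_subset)
  have "m \<le> card ({..<n} - x)" using mn cAx by simp
  then obtain v where v: "v \<subseteq> {..<n} - x" "card v = m" "finite v"
    by (rule obtain_subset_with_card_n)
  let ?y = "u \<union> v"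
  have dj: "u \<inter> v = {}" using u v by blast
  have "card ?y = b" using u v dj mb by (simp add: card_Un_disjoint)
  moreover have "?y \<subseteq> {..<n}" using u v xA by blast
  moreover have "?y - x = v" using u v by blast
  moreover have "x - ?y = x - u" using v by blast
  moreover have "card (x - u) = a - (b - m)" using u cx by (simp add: card_Diff_subset)
  ultimately have "?y \<in> Xr n b \<and> card (?y - x) = m \<and> card (x - ?y) = a - (b - m)"
    using v(2) by (simp add: Xr_def)
  then show ?thesis by blast
qed

lemma kdom_mem:
  assumes "x1 \<in> Xr n r1" "x2 \<in> Xr n r2"
  shows "card (x2 - x1) \<in> kdom n r1 r2"
proof -
  have f: "finite x1" "finite x2" using assms Xr_finite_el by auto
  have c: "card x1 = r1" "card x2 = r2" using assms by (auto simp: Xr_def)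
  have "r2 - r1 \<le> card (x2 - x1)" using diff_card_le_card_Diff[OF f(1), of x2] c by simp
  moreover have "card (x2 - x1) \<le> r2" using c f card_mono[of x2 "x2 - x1"] by auto
  moreover have "card (x2 - x1) \<le> n - r1"
  proof -
    have "x2 - x1 \<subseteq> {..<n} - x1" using assms by (auto simp: Xr_def)
    then have "card (x2 - x1) \<le> card ({..<n} - x1)" by (intro card_mono) auto
    also have "\<dots> = n - r1" using assms c f by (simp add: card_Diff_subset Xr_def)
    finally show ?thesis .
  qed
  ultimately show ?thesis by (simp add: kdom_def)
qed

lemma kdom_realize:
  assumes x2: "x2 \<in> Xr n r2" and t: "t \<in> kdom n r1 r2" and r1: "r1 \<le> n"
  shows "\<exists>x1\<in>Xr n r1. card (x2 - x1) = t"
proof -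
  have t1: "r2 - r1 \<le> t" "t \<le> n - r1" "t \<le> r2" using t by (auto simp: kdom_def)
  have r2: "r2 \<le> n" using x2 Xr_sub[OF x2] Xr_card[OF x2] card_mono[of "{..<n}" x2] by auto
  have h: "r1 + t - r2 \<le> r1" "r1 - (r1 + t - r2) \<le> r2" "r1 + t - r2 \<le> n - r2" using t1 r1 r2 by arith+
  have "r2 - (r1 - (r1 + t - r2)) = t" using t1 by arith
  then show ?thesis using realize[OF x2 h] by auto
qed

lemma kdom_card:
  assumes "s \<le> Nfun n r1 r2" "r1 \<le> n" "r2 \<le> n"
  shows "s < card (kdom n r1 r2)"
  using assms unfolding kdom_def Nfun_def by (simp add: min_def split: if_splits; arith)

lemma card_diff_int: "finite x \<Longrightarrow> card (x - z) = card x - card (x \<inter> z)"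
  by (simp add: card_Diff_subset_Int)

lemma T_col:
  fixes \<mu> :: "nat \<Rightarrow> complex"
  assumes sr1: "s \<le> r1" and sn: "s \<le> n - r1" and s: "s > 0"
    and rec: "\<forall>m<s. of_nat (r1 - s + 1 + m) * \<mu> m + of_nat (n - r1 - m) * \<mu> (Suc m) = 0"
    and x1: "x1 \<in> Xr n r1" and z: "z \<in> Xr n (s - 1)"
  shows "(\<Sum>y\<in>{y \<in> Xr n s. z \<subseteq> y}. \<mu> (card (y - x1))) = 0"
proof -
  have fx: "finite x1" "finite z" using x1 z Xr_finite_el by auto
  have cx: "card x1 = r1" "card z = s - 1" using x1 z Xr_card by auto
  have x1A: "x1 \<subseteq> {..<n}" using x1 Xr_sub by auto
  have zA: "z \<subseteq> {..<n}" using z Xr_sub by auto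
  define m where "m = card (z - x1)"
  have ms: "m < s" using card_mono[of z "z - x1"] fx cx s by (auto simp: m_def)
  have c1: "card (x1 - z) = r1 - s + 1 + m"
  proof -
    have "card (x1 - z) = r1 - card (x1 \<inter> z)" using card_diff_int[OF fx(1)] cx by simp
    moreover have "m = (s - 1) - card (x1 \<inter> z)" using card_diff_int[OF fx(2), of x1] cx by (simp add: m_def Int_commute)
    moreover have "card (x1 \<inter> z) \<le> s - 1" using card_mono[OF fx(2), of "x1 \<inter> z"] cx by auto
    ultimately show ?thesis using sr1 s by linarith
  qed
  have c2: "card ({..<n} - x1 - z) = n - r1 - m"
  proof -
    have "{..<n} - x1 - z = ({..<n} - x1) - (z - x1)" by blast
    moreover have "card (({..<n} - x1) - (z - x1)) = card ({..<n} - x1) - card (z - x1)"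
      using zA fx by (intro card_Diff_subset) auto
    moreover have "card ({..<n} - x1) = n - r1" using x1A fx cx by (simp add: card_Diff_subset)
    ultimately show ?thesis by (simp add: m_def)
  qed
  have "(\<Sum>y\<in>{y \<in> Xr n s. z \<subseteq> y}. \<mu> (card (y - x1)))
      = (\<Sum>y\<in>{y \<in> Xr n (Suc (s - 1)). z \<subseteq> y}. \<mu> (card (y - x1)))" using s by simp
  also have "\<dots> = of_nat (card (x1 - z)) * \<mu> m + of_nat (card ({..<n} - x1 - z)) * \<mu> (Suc m)"
    unfolding m_def by (rule col_sum[OF z x1A])
  also have "\<dots> = 0" using rec ms c1 c2 by simp
  finally show ?thesis .
qed

lemma beta_kill:
  fixes \<mu> :: "nat \<Rightarrow> complex"
  assumes sr1: "s \<le> r1" and sn: "s \<le> n - r1" and s: "s > 0"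
    and rec: "\<forall>m<s. of_nat (r1 - s + 1 + m) * \<mu> m + of_nat (n - r1 - m) * \<mu> (Suc m) = 0"
    and y: "y \<in> Xr n s" and z: "z \<in> Xr n (s - 1)"
  shows "(\<Sum>x1\<in>{x1 \<in> Xr n r1. z \<subseteq> x1}. \<mu> (card (y - x1))) = 0"
proof -
  let ?A = "{..<n::nat}"
  define c where "c = r1 - (s - 1)"
  define \<beta> where "\<beta> d = (\<Sum>b\<le>c. of_nat ((d choose b) * ((n - (s - 1) - d) choose (c - b))) * \<mu> (d - b))" for d
  have step1: "(\<Sum>x1\<in>{x1 \<in> Xr n r1. z \<subseteq> x1}. \<mu> (card (y - x1))) = \<beta> (card (y - z))"
    if y: "y \<in> Xr n s" and z: "z \<in> Xr n (s - 1)" for y z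
  proof -
    have fy: "finite y" "finite z" using y z Xr_finite_el by auto
    have cy: "card y = s" "card z = s - 1" using y z Xr_card by auto
    have yA: "y \<subseteq> ?A" "z \<subseteq> ?A" using y z Xr_sub by auto
    have S: "{x1 \<in> Xr n r1. z \<subseteq> x1} = {x. z \<subseteq> x \<and> x \<subseteq> ?A \<and> card x = card z + c}"
      using sup_eq[OF yA(2), of r1] cy sr1 by (simp add: c_def)
    have "(\<Sum>x1\<in>{x1 \<in> Xr n r1. z \<subseteq> x1}. \<mu> (card (y - x1)))
        = (\<Sum>x\<in>{x. z \<subseteq> x \<and> x \<subseteq> ?A \<and> card x = card z + c}. (\<lambda>b. \<mu> (card (y - z) - b)) (card ((x - z) \<inter> y)))"
      unfolding S
    proof (rule sum.cong)
      fix x assume x: "x \<in> {x. z \<subseteq> x \<and> x \<subseteq> ?A \<and> card x = card z + c}"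
      have "y - x = (y - z) - ((x - z) \<inter> y)" using x by blast
      moreover have "card ((y - z) - ((x - z) \<inter> y)) = card (y - z) - card ((x - z) \<inter> y)"
        using fy by (intro card_Diff_subset) auto
      ultimately show "\<mu> (card (y - x)) = (\<lambda>b. \<mu> (card (y - z) - b)) (card ((x - z) \<inter> y))" by simp
    qed simp
    also have "\<dots> = (\<Sum>b\<le>c. of_nat ((card (y - z) choose b) * (card (?A - z - y) choose (c - b))) * \<mu> (card (y - z) - b))"
      by (rule MCsum) (use yA in auto)
    also have "card (?A - z - y) = n - (s - 1) - card (y - z)"
    proof -
      have "?A - z - y = (?A - z) - (y - z)" by blast
      moreover have "card ((?A - z) - (y - z)) = card (?A - z) - card (y - z)"
        using yA fy by (intro card_Diff_subset) auto
      moreover have "card (?A - z) = n - (s - 1)" using yA fy cy by (simp add: card_Diff_subset)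
      ultimately show ?thesis by simp
    qed
    finally show ?thesis by (simp add: \<beta>_def)
  qed
  have step2: "of_nat m * \<beta> m + of_nat (n - (s - 1) - m) * \<beta> (Suc m) = 0"
    if z': "z' \<in> Xr n (s - 1)" and m: "card (z' - z) = m" for z' m
  proof -
    have fz: "finite z" "finite z'" using z z' Xr_finite_el by auto
    have cz: "card z = s - 1" "card z' = s - 1" using z z' Xr_card by auto
    have zA: "z \<subseteq> ?A" "z' \<subseteq> ?A" using z z' Xr_sub by auto
    have "(\<Sum>y\<in>{y \<in> Xr n s. z' \<subseteq> y}. \<beta> (card (y - z)))
        = (\<Sum>y\<in>{y \<in> Xr n s. z' \<subseteq> y}. \<Sum>x1\<in>{x1 \<in> Xr n r1. z \<subseteq> x1}. \<mu> (card (y - x1)))"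
      by (rule sum.cong) (use step1 z in auto)
    also have "\<dots> = (\<Sum>x1\<in>{x1 \<in> Xr n r1. z \<subseteq> x1}. \<Sum>y\<in>{y \<in> Xr n s. z' \<subseteq> y}. \<mu> (card (y - x1)))"
      by (rule sum.swap)
    also have "\<dots> = 0"
      by (rule sum.neutral) (use T_col[OF sr1 sn s rec _ z'] in auto)
    finally have 0: "(\<Sum>y\<in>{y \<in> Xr n s. z' \<subseteq> y}. \<beta> (card (y - z))) = 0" .
    have "(\<Sum>y\<in>{y \<in> Xr n s. z' \<subseteq> y}. \<beta> (card (y - z)))
       = (\<Sum>y\<in>{y \<in> Xr n (Suc (s - 1)). z' \<subseteq> y}. \<beta> (card (y - z)))" using s by simp
    also have "\<dots> = of_nat (card (z - z')) * \<beta> (card (z' - z)) + of_nat (card (?A - z - z')) * \<beta> (Suc (card (z' - z)))"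
      by (rule col_sum[OF z' zA(1)])
    finally have 1: "of_nat (card (z - z')) * \<beta> m + of_nat (card (?A - z - z')) * \<beta> (Suc m) = 0"
      using 0 m by simp
    have "card (z - z') = card z - card (z \<inter> z')" by (rule card_diff_int[OF fz(1)])
    moreover have "card (z' - z) = card z' - card (z' \<inter> z)" by (rule card_diff_int[OF fz(2)])
    ultimately have e1: "card (z - z') = m" using cz m by (simp add: Int_commute)
    have "?A - z - z' = (?A - z) - (z' - z)" by blast
    moreover have "card ((?A - z) - (z' - z)) = card (?A - z) - card (z' - z)"
      using zA fz by (intro card_Diff_subset) auto
    moreover have "card (?A - z) = n - (s - 1)" using zA fz cz by (simp add: card_Diff_subset)
    ultimately have e2: "card (?A - z - z') = n - (s - 1) - m" using m by simp
    show ?thesis using 1 e1 e2 by simp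
  qed
  have eq: "of_nat m * \<beta> m + of_nat (n - (s - 1) - m) * \<beta> (Suc m) = 0" if m: "m \<le> s - 1" for m
  proof -
    have "\<exists>z'\<in>Xr n (s - 1). card (z' - z) = m \<and> card (z - z') = (s - 1) - ((s - 1) - m)"
      by (rule realize[OF z]) (use m sr1 sn in auto)
    then show ?thesis using step2 by blast
  qed
  have bz: "\<beta> m = 0" if "1 \<le> m" "m \<le> s" for m
    using that
  proof (induction m)
    case 0 then show ?case by simp
  next
    case (Suc m)
    show ?case
    proof (cases "m = 0")
      case True
      have "of_nat (n - (s - 1)) * \<beta> (Suc 0) = 0" using eq[of 0] by simp
      moreover have "n - (s - 1) \<noteq> 0" using sr1 sn s by linarith
      ultimately show ?thesis using True unfolding mult_eq_0_iff of_nat_eq_0_iff by simp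
    next
      case False
      then have "\<beta> m = 0" using Suc by simp
      then have "of_nat (n - (s - 1) - m) * \<beta> (Suc m) = 0" using eq[of m] Suc by simp
      moreover have "n - (s - 1) - m \<noteq> 0" using sr1 sn s Suc by linarith
      ultimately show ?thesis unfolding mult_eq_0_iff of_nat_eq_0_iff by blast
    qed
  qed
  have fy: "finite y" "finite z" using y z Xr_finite_el by auto
  have cy: "card y = s" "card z = s - 1" using y z Xr_card by auto
  have "1 \<le> card (y - z)" using diff_card_le_card_Diff[OF fy(2), of y] cy s by simp
  moreover have "card (y - z) \<le> s" using card_mono[OF fy(1), of "y - z"] cy by auto
  ultimately show ?thesis using step1[OF y z] bz by simp
qed

lemma T_V:
  fixes \<mu> :: "nat \<Rightarrow> complex"
  assumes sr1: "s \<le> r1" and sn: "s \<le> n - r1"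
    and rec: "\<forall>m<s. of_nat (r1 - s + 1 + m) * \<mu> m + of_nat (n - r1 - m) * \<mu> (Suc m) = 0"
  shows "kernel_op n r1 s \<mu> \<psi> \<in> Vr n s s"
proof (rule Vcrit)
  let ?f = "kernel_op n r1 s \<mu> \<psi>"
  have "?f \<in> L2r n s" by (simp add: kernel_op_def L2r_def)
  then have "up_op n s s ?f = ?f" by (rule up_op_self)
  then show "?f \<in> Mr n s s" unfolding Mr_def using \<open>?f \<in> L2r n s\<close> by (metis image_eqI)
next
  assume s: "0 < s"
  show "\<forall>z\<in>Xr n (s - 1). (\<Sum>x\<in>{x \<in> Xr n s. z \<subseteq> x}. kernel_op n r1 s \<mu> \<psi> x) = 0"
  proof
    fix z assume z: "z \<in> Xr n (s - 1)"
    have "(\<Sum>x\<in>{x \<in> Xr n s. z \<subseteq> x}. kernel_op n r1 s \<mu> \<psi> x)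
        = (\<Sum>x\<in>{x \<in> Xr n s. z \<subseteq> x}. \<Sum>x1\<in>Xr n r1. \<mu> (card (x - x1)) * \<psi> x1)"
      by (rule sum.cong) (auto simp: kernel_op_def)
    also have "\<dots> = (\<Sum>x1\<in>Xr n r1. (\<Sum>x\<in>{x \<in> Xr n s. z \<subseteq> x}. \<mu> (card (x - x1))) * \<psi> x1)"
      by (simp add: sum.swap[of _ "Xr n r1"] sum_distrib_right)
    also have "\<dots> = 0" using T_col[OF sr1 sn s rec _ z] by simp
    finally show "(\<Sum>x\<in>{x \<in> Xr n s. z \<subseteq> x}. kernel_op n r1 s \<mu> \<psi> x) = 0" .
  qed
qed

lemma T_row:
  fixes \<mu> :: "nat \<Rightarrow> complex"
  assumes sr1: "s \<le> r1" and sn: "s \<le> n - r1"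
    and rec: "\<forall>m<s. of_nat (r1 - s + 1 + m) * \<mu> m + of_nat (n - r1 - m) * \<mu> (Suc m) = 0"
    and y: "y \<in> Xr n s"
  shows "(\<lambda>x1. if x1 \<in> Xr n r1 then cnj (\<mu> (card (y - x1))) else 0) \<in> Vr n r1 s"
proof (rule Vcrit)
  obtain a where a: "\<forall>u\<le>s. cnj (\<mu> (s - u)) = (\<Sum>k\<le>s. a k * of_nat (u choose k))"
    using newton_fin[where w="\<lambda>u. cnj (\<mu> (s - u))" and d=s] by blast
  have fy: "finite y" and cy: "card y = s" using y Xr_finite_el Xr_card by auto
  have "(\<lambda>x1. if x1 \<in> Xr n r1 then cnj (\<mu> (card (y - x1))) else 0)
      = (\<lambda>x. if x \<in> Xr n r1 then (\<Sum>k\<le>s. a k * of_nat (card (x \<inter> y) choose k)) else 0)"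
  proof
    fix x show "(if x \<in> Xr n r1 then cnj (\<mu> (card (y - x))) else 0)
      = (if x \<in> Xr n r1 then (\<Sum>k\<le>s. a k * of_nat (card (x \<inter> y) choose k)) else 0)"
    proof (cases "x \<in> Xr n r1")
      case True
      have "card (y - x) = s - card (x \<inter> y)" using card_diff_int[OF fy, of x] cy by (simp add: Int_commute)
      moreover have "card (x \<inter> y) \<le> s" using card_mono[OF fy, of "x \<inter> y"] cy by auto
      ultimately show ?thesis using True a by simp
    qed simp
  qed
  then show "(\<lambda>x1. if x1 \<in> Xr n r1 then cnj (\<mu> (card (y - x1))) else 0) \<in> Mr n r1 s"
    using PolyM[OF sr1, of n a y] by simp
next
  assume s: "0 < s"
  show "\<forall>z\<in>Xr n (s - 1). (\<Sum>x\<in>{x \<in> Xr n r1. z \<subseteq> x}. (if x \<in> Xr n r1 then cnj (\<mu> (card (y - x))) else 0)) = 0"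
  proof
    fix z assume z: "z \<in> Xr n (s - 1)"
    have "(\<Sum>x\<in>{x \<in> Xr n r1. z \<subseteq> x}. (if x \<in> Xr n r1 then cnj (\<mu> (card (y - x))) else 0))
       = cnj (\<Sum>x\<in>{x \<in> Xr n r1. z \<subseteq> x}. \<mu> (card (y - x)))"
      by (simp add: cnj_sum)
    also have "\<dots> = 0" using beta_kill[OF sr1 sn s rec y z] by simp
    finally show "(\<Sum>x\<in>{x \<in> Xr n r1. z \<subseteq> x}. (if x \<in> Xr n r1 then cnj (\<mu> (card (y - x))) else 0)) = 0" .
  qed
qed

lemma T_kill:
  fixes \<mu> :: "nat \<Rightarrow> complex"
  assumes sr1: "s \<le> r1" and sn: "s \<le> n - r1"
    and rec: "\<forall>m<s. of_nat (r1 - s + 1 + m) * \<mu> m + of_nat (n - r1 - m) * \<mu> (Suc m) = 0"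
    and orth: "\<forall>\<phi>\<in>Vr n r1 s. inner_r n r1 \<psi> \<phi> = 0"
  shows "kernel_op n r1 s \<mu> \<psi> = (\<lambda>_. 0)"
proof
  fix y show "kernel_op n r1 s \<mu> \<psi> y = 0"
  proof (cases "y \<in> Xr n s")
    case True
    let ?e = "\<lambda>x1. if x1 \<in> Xr n r1 then cnj (\<mu> (card (y - x1))) else 0"
    have "inner_r n r1 \<psi> ?e = 0" using orth T_row[OF sr1 sn rec True] by blast
    moreover have "inner_r n r1 \<psi> ?e = (\<Sum>x1\<in>Xr n r1. \<mu> (card (y - x1)) * \<psi> x1)"
      unfolding inner_r_def by (rule sum.cong) auto
    ultimately show ?thesis using True by (simp add: kernel_op_def)
  qed (simp add: kernel_op_def)
qed

lemma comp_eq: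
  fixes \<mu> K :: "nat \<Rightarrow> complex"
  assumes K: "\<forall>t\<le>r2. K t = (\<Sum>j\<le>s. of_nat ((t choose j) * ((r2 - t) choose (s - j))) * \<mu> j)"
  shows "kernel_op n r1 r2 K \<psi> = up_op n s r2 (kernel_op n r1 s \<mu> \<psi>)"
proof
  fix x2 show "kernel_op n r1 r2 K \<psi> x2 = up_op n s r2 (kernel_op n r1 s \<mu> \<psi>) x2"
  proof (cases "x2 \<in> Xr n r2")
    case True
    have fx: "finite x2" and cx: "card x2 = r2" using True Xr_finite_el Xr_card by auto
    have inner: "(\<Sum>y\<in>{y \<in> Xr n s. y \<subseteq> x2}. \<mu> (card (y - x1))) = K (card (x2 - x1))" for x1
    proof -
      have S: "{y \<in> Xr n s. y \<subseteq> x2} = {y. {} \<subseteq> y \<and> y \<subseteq> x2 \<and> card y = card ({}::nat set) + s}"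
        using True unfolding Xr_def by auto
      have eq1: "(\<Sum>y\<in>{y. {} \<subseteq> y \<and> y \<subseteq> x2 \<and> card y = card ({}::nat set) + s}. \<mu> (card (y - x1)))
          = (\<Sum>y\<in>{y. {} \<subseteq> y \<and> y \<subseteq> x2 \<and> card y = card ({}::nat set) + s}. \<mu> (card ((y - {}) \<inter> (x2 - x1))))"
      proof (rule sum.cong)
        fix y assume "y \<in> {y. {} \<subseteq> y \<and> y \<subseteq> x2 \<and> card y = card ({}::nat set) + s}"
        then have "y - x1 = (y - {}) \<inter> (x2 - x1)" by blast
        then show "\<mu> (card (y - x1)) = \<mu> (card ((y - {}) \<inter> (x2 - x1)))" by simp
      qed simp
      have "(\<Sum>y\<in>{y \<in> Xr n s. y \<subseteq> x2}. \<mu> (card (y - x1)))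
          = (\<Sum>y\<in>{y. {} \<subseteq> y \<and> y \<subseteq> x2 \<and> card y = card ({}::nat set) + s}. \<mu> (card ((y - {}) \<inter> (x2 - x1))))"
        using S eq1 by simp
      also have "\<dots> = (\<Sum>b\<le>s. of_nat ((card (x2 - x1 - {}) choose b) * (card (x2 - {} - (x2 - x1)) choose (s - b))) * \<mu> b)"
        by (rule MCsum) (use fx in auto)
      also have "card (x2 - {} - (x2 - x1)) = r2 - card (x2 - x1)"
      proof -
        have "x2 - {} - (x2 - x1) = x2 - (x2 - x1)" by simp
        moreover have "card (x2 - (x2 - x1)) = card x2 - card (x2 - x1)" using fx by (intro card_Diff_subset) auto
        ultimately show ?thesis using cx by simp
      qed
      finally show ?thesis using K card_mono[OF fx, of "x2 - x1"] cx by auto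
    qed
    have "up_op n s r2 (kernel_op n r1 s \<mu> \<psi>) x2 = (\<Sum>y\<in>{y \<in> Xr n s. y \<subseteq> x2}. \<Sum>x1\<in>Xr n r1. \<mu> (card (y - x1)) * \<psi> x1)"
      using True by (simp add: up_op_eval kernel_op_def)
    also have "\<dots> = (\<Sum>x1\<in>Xr n r1. (\<Sum>y\<in>{y \<in> Xr n s. y \<subseteq> x2}. \<mu> (card (y - x1))) * \<psi> x1)"
      by (simp add: sum.swap[of _ "Xr n r1"] sum_distrib_right)
    also have "\<dots> = kernel_op n r1 r2 K \<psi> x2" using True by (simp add: inner kernel_op_def)
    finally show ?thesis by simp
  qed (simp add: kernel_op_def up_op_def)
qed

lemma Dk_kill:
  assumes phi: "\<phi> \<in> Vr n s s" and s: "s > 0" and k: "k \<le> s - 1" and u: "u \<in> Xr n k"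
  shows "(\<Sum>y\<in>{y \<in> Xr n s. u \<subseteq> y}. \<phi> y) = 0"
proof -
  let ?Z = "{z' \<in> Xr n (s - 1). u \<subseteq> z'}" and ?Y = "{y \<in> Xr n s. u \<subseteq> y}"
  have 0: "(\<Sum>z'\<in>?Z. \<Sum>y\<in>{y\<in>?Y. z' \<subseteq> y}. \<phi> y) = 0"
  proof (rule sum.neutral, rule ballI)
    fix z' assume z': "z' \<in> ?Z"
    have "{y\<in>?Y. z' \<subseteq> y} = {y \<in> Xr n s. z' \<subseteq> y}" using z' by auto
    then show "(\<Sum>y\<in>{y\<in>?Y. z' \<subseteq> y}. \<phi> y) = 0" using Vkill[OF phi s] z' by simp
  qed
  have "(\<Sum>z'\<in>?Z. \<Sum>y\<in>{y\<in>?Y. z' \<subseteq> y}. \<phi> y) = (\<Sum>y\<in>?Y. \<Sum>z'\<in>{z'\<in>?Z. z' \<subseteq> y}. \<phi> y)"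
    by (rule sum.swap_restrict) (simp_all add: Xr_fin)
  also have "\<dots> = (\<Sum>y\<in>?Y. of_nat (s - k) * \<phi> y)"
  proof (rule sum.cong)
    fix y assume y: "y \<in> ?Y"
    have fy: "finite y" and cy: "card y = s" using y Xr_finite_el Xr_card by auto
    have fu: "finite u" and cu: "card u = k" using u Xr_finite_el Xr_card by auto
    have "{z'\<in>?Z. z' \<subseteq> y} = {w. u \<subseteq> w \<and> w \<subseteq> y \<and> card w = card u + (s - 1 - k) \<and> card ((w - u) \<inter> {}) = 0}"
      using y k cu by (auto simp: Xr_def)
    then have "card {z'\<in>?Z. z' \<subseteq> y} = (card ({} - u) choose 0) * (card (y - u - {}) choose (s - 1 - k - 0))"
      using MC[OF fy, of u "{}" 0 "s - 1 - k"] y by simp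
    also have "card (y - u - {}) = s - k" using y fu cu cy by (simp add: card_Diff_subset)
    also have "(s - k) choose (s - 1 - k - 0) = s - k"
      using binomial_symmetric[of "s - 1 - k" "s - k"] k s by simp
    finally show "(\<Sum>z'\<in>{z'\<in>?Z. z' \<subseteq> y}. \<phi> y) = of_nat (s - k) * \<phi> y" by simp
  qed simp
  finally have "of_nat (s - k) * (\<Sum>y\<in>?Y. \<phi> y) = 0" using 0 by (simp add: sum_distrib_left)
  moreover have "(of_nat (s - k) :: complex) \<noteq> 0" using k s by simp
  ultimately show ?thesis by simp
qed

lemma up_V:
  assumes phi: "\<phi> \<in> Vr n s s"
  shows "up_op n s r2 \<phi> \<in> Vr n r2 s"
proof (rule Vcrit)
  have "\<phi> \<in> L2r n s" using phi Vr_Mr Mr_L2r by blast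
  then show "up_op n s r2 \<phi> \<in> Mr n r2 s" by (simp add: Mr_def)
next
  assume s: "0 < s"
  show "\<forall>z\<in>Xr n (s - 1). (\<Sum>x\<in>{x \<in> Xr n r2. z \<subseteq> x}. up_op n s r2 \<phi> x) = 0"
  proof
    fix z assume z: "z \<in> Xr n (s - 1)"
    have fz: "finite z" and cz: "card z = s - 1" and zA: "z \<subseteq> {..<n}" using z Xr_finite_el Xr_card Xr_sub by auto
    define cnt where "cnt m = (if m \<le> r2 then (n - m) choose (r2 - m) else 0)" for m
    have cnt: "card {x \<in> {x \<in> Xr n r2. z \<subseteq> x}. y \<subseteq> x} = cnt (card (y \<union> z))" if y: "y \<in> Xr n s" for y
    proof -
      have fy: "finite y" and yA: "y \<subseteq> {..<n}" using y Xr_finite_el Xr_sub by auto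
      have S: "{x \<in> {x \<in> Xr n r2. z \<subseteq> x}. y \<subseteq> x} = {x \<in> Xr n r2. y \<union> z \<subseteq> x}" by auto
      show ?thesis
      proof (cases "card (y \<union> z) \<le> r2")
        case True
        have "{x \<in> Xr n r2. y \<union> z \<subseteq> x} = {x. y \<union> z \<subseteq> x \<and> x \<subseteq> {..<n} \<and> card x = card (y \<union> z) + (r2 - card (y \<union> z)) \<and> card ((x - (y \<union> z)) \<inter> {}) = 0}"
          using sup_eq[of "y \<union> z" n r2] True yA zA by auto
        then have "card {x \<in> Xr n r2. y \<union> z \<subseteq> x} = (card ({} - (y \<union> z)) choose 0) * (card ({..<n} - (y \<union> z) - {}) choose (r2 - card (y \<union> z) - 0))"
          using MC[of "{..<n}" "y \<union> z" "{}" 0 "r2 - card (y \<union> z)"] yA zA by simp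
        also have "card ({..<n} - (y \<union> z) - {}) = n - card (y \<union> z)" using yA zA fy fz by (simp add: card_Diff_subset)
        finally show ?thesis using True S by (simp add: cnt_def)
      next
        case False
        have E: "{x \<in> Xr n r2. y \<union> z \<subseteq> x} = {}"
        proof (rule ccontr)
          assume "{x \<in> Xr n r2. y \<union> z \<subseteq> x} \<noteq> {}"
          then obtain x where x: "x \<in> Xr n r2" "y \<union> z \<subseteq> x" by blast
          then have "card (y \<union> z) \<le> card x" using Xr_finite_el[OF x(1)] by (intro card_mono) auto
          then show False using False x Xr_card by auto
        qed
        show ?thesis unfolding S E using False by (simp add: cnt_def)
      qed
    qed
    obtain a where a: "\<forall>u\<le>s - 1. (of_nat (cnt (s + (s - 1) - u)) :: complex) = (\<Sum>k\<le>s - 1. a k * of_nat (u choose k))"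
      using newton_fin[where w="\<lambda>u. of_nat (cnt (s + (s - 1) - u))" and d="s - 1"] by blast
    have cnt2: "(of_nat (card {x \<in> {x \<in> Xr n r2. z \<subseteq> x}. y \<subseteq> x}) :: complex) = (\<Sum>k\<le>s - 1. a k * of_nat (card (y \<inter> z) choose k))"
      if y: "y \<in> Xr n s" for y
    proof -
      have fy: "finite y" and cy: "card y = s" using y Xr_finite_el Xr_card by auto
      have "card (y \<union> z) + card (y \<inter> z) = card y + card z" using card_Un_Int[OF fy fz] by simp
      then have "card (y \<union> z) = s + (s - 1) - card (y \<inter> z)" using cy cz by simp
      moreover have "card (y \<inter> z) \<le> s - 1" using card_mono[OF fz, of "y \<inter> z"] cz by auto
      ultimately show ?thesis using cnt[OF y] a by simp
    qed
    have inner0: "(\<Sum>y\<in>Xr n s. of_nat (card (y \<inter> z) choose k) * \<phi> y) = 0" if k: "k \<le> s - 1" for k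
    proof -
      let ?U = "{u. u \<subseteq> z \<and> card u = k}"
      have fU: "finite ?U" by (rule finite_subset[of _ "Pow z"]) (use fz in auto)
      have "(\<Sum>y\<in>Xr n s. of_nat (card (y \<inter> z) choose k) * \<phi> y) = (\<Sum>y\<in>Xr n s. \<Sum>u\<in>{u\<in>?U. u \<subseteq> y}. \<phi> y)"
      proof (rule sum.cong)
        fix y assume y: "y \<in> Xr n s"
        have "finite (y \<inter> z)" using fz by simp
        then have "card {u. u \<subseteq> y \<inter> z \<and> card u = k} = card (y \<inter> z) choose k" by (rule n_subsets)
        moreover have "{u. u \<subseteq> y \<inter> z \<and> card u = k} = {u\<in>?U. u \<subseteq> y}" by auto
        ultimately show "of_nat (card (y \<inter> z) choose k) * \<phi> y = (\<Sum>u\<in>{u\<in>?U. u \<subseteq> y}. \<phi> y)" by simp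
      qed simp
      also have "\<dots> = (\<Sum>u\<in>?U. \<Sum>y\<in>{y \<in> Xr n s. u \<subseteq> y}. \<phi> y)"
        by (rule sum.swap_restrict) (simp_all add: Xr_fin fU)
      also have "\<dots> = 0"
      proof (rule sum.neutral, rule ballI)
        fix u assume "u \<in> ?U"
        then have "u \<in> Xr n k" using zA by (auto simp: Xr_def)
        then show "(\<Sum>y\<in>{y \<in> Xr n s. u \<subseteq> y}. \<phi> y) = 0" by (rule Dk_kill[OF phi s k])
      qed
      finally show ?thesis .
    qed
    have "(\<Sum>x\<in>{x \<in> Xr n r2. z \<subseteq> x}. up_op n s r2 \<phi> x)
        = (\<Sum>x\<in>{x \<in> Xr n r2. z \<subseteq> x}. \<Sum>y\<in>{y \<in> Xr n s. y \<subseteq> x}. \<phi> y)"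
      by (rule sum.cong) (auto simp: up_op_eval)
    also have "\<dots> = (\<Sum>y\<in>Xr n s. \<Sum>x\<in>{x \<in> {x \<in> Xr n r2. z \<subseteq> x}. y \<subseteq> x}. \<phi> y)"
      by (rule sum.swap_restrict) (simp_all add: Xr_fin)
    also have "\<dots> = (\<Sum>y\<in>Xr n s. (\<Sum>k\<le>s - 1. a k * of_nat (card (y \<inter> z) choose k)) * \<phi> y)"
    proof (rule sum.cong)
      fix y assume y: "y \<in> Xr n s"
      show "(\<Sum>x\<in>{x \<in> {x \<in> Xr n r2. z \<subseteq> x}. y \<subseteq> x}. \<phi> y) = (\<Sum>k\<le>s - 1. a k * of_nat (card (y \<inter> z) choose k)) * \<phi> y"
        by (simp only: sum_constant cnt2[OF y])
    qed simp
    also have "\<dots> = (\<Sum>k\<le>s - 1. a k * (\<Sum>y\<in>Xr n s. of_nat (card (y \<inter> z) choose k) * \<phi> y))"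
      by (simp add: sum_distrib_right sum_distrib_left sum.swap[of _ "Xr n s"] mult.assoc)
    also have "\<dots> = 0" using inner0 by simp
    finally show "(\<Sum>x\<in>{x \<in> Xr n r2. z \<subseteq> x}. up_op n s r2 \<phi> x) = 0" .
  qed
qed

lemma comp_ok:
  fixes \<mu> K :: "nat \<Rightarrow> complex"
  assumes sr1: "s \<le> r1" and sn: "s \<le> n - r1"
    and rec: "\<forall>m<s. of_nat (r1 - s + 1 + m) * \<mu> m + of_nat (n - r1 - m) * \<mu> (Suc m) = 0"
    and K: "\<forall>t\<le>r2. K t = (\<Sum>j\<le>s. of_nat ((t choose j) * ((r2 - t) choose (s - j))) * \<mu> j)"
  shows "kernel_ok n r1 r2 s K"
  unfolding kernel_ok_def
proof (intro conjI ballI impI)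
  fix \<psi> assume "\<psi> \<in> Vr n r1 s"
  show "kernel_op n r1 r2 K \<psi> \<in> Vr n r2 s"
    unfolding comp_eq[OF K] by (rule up_V[OF T_V[OF sr1 sn rec]])
next
  fix \<psi> assume "\<psi> \<in> L2r n r1" "\<forall>\<phi>\<in>Vr n r1 s. inner_r n r1 \<psi> \<phi> = 0"
  then have "kernel_op n r1 s \<mu> \<psi> = (\<lambda>_. 0)" by (intro T_kill[OF sr1 sn rec])
  then show "kernel_op n r1 r2 K \<psi> = (\<lambda>_. 0)"
    unfolding comp_eq[OF K] by (simp add: up_op_def fun_eq_iff)
qed

definition lamc :: "nat \<Rightarrow> nat \<Rightarrow> nat \<Rightarrow> nat \<Rightarrow> complex" where
  "lamc n r1 s j = (-1) ^ j * pochhammer (of_nat r1 - of_nat s + 1) j / falling (of_nat (n - r1)) j"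

definition Pp :: "nat \<Rightarrow> nat \<Rightarrow> nat \<Rightarrow> nat \<Rightarrow> complex poly" where
  "Pp n r1 r2 s = smult (inverse (of_nat (r2 choose s)))
     (\<Sum>j\<le>s. smult (lamc n r1 s j) (pgb 0 1 j * pgb (of_nat r2) (-1) (s - j)))"

lemma falling_Suc: "falling a (Suc m) = falling a m * (a - of_nat m)"
  by (simp add: falling_def)

lemma falling_nat: "j \<le> b \<Longrightarrow> falling (of_nat b) j = of_nat (\<Prod>i<j. b - i)"
  by (simp add: falling_def of_nat_diff)

lemma falling_nz: "j \<le> b \<Longrightarrow> falling (of_nat b) j \<noteq> 0"
  by (simp add: falling_nat)

lemma lamc_rec:
  assumes sr1: "s \<le> r1" and sn: "s \<le> n - r1" and m: "m < s"
  shows "of_nat (r1 - s + 1 + m) * lamc n r1 s m + of_nat (n - r1 - m) * lamc n r1 s (Suc m) = 0"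
proof -
  let ?a = "of_nat r1 - of_nat s + 1 :: complex" and ?b = "of_nat (n - r1) :: complex"
  have a: "?a + of_nat m = of_nat (r1 - s + 1 + m)" using sr1 by (simp add: of_nat_diff)
  have b: "?b - of_nat m = of_nat (n - r1 - m)" using sn m by (simp add: of_nat_diff)
  have F: "falling ?b m \<noteq> 0" using falling_nz[of m "n - r1"] sn m by simp
  have "n - r1 - m \<noteq> 0" using sn m by simp
  then have B: "(of_nat (n - r1 - m) :: complex) \<noteq> 0" by (metis of_nat_eq_0_iff)
  have key: "\<And>A B F P (e::complex). B \<noteq> 0 \<Longrightarrow> F \<noteq> 0 \<Longrightarrow> A * (e * P / F) + B * (- e * (P * A) / (F * B)) = 0"
    by (simp add: field_simps)
  have L1: "lamc n r1 s m = (-1) ^ m * pochhammer ?a m / falling ?b m" by (simp add: lamc_def)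
  have L2: "lamc n r1 s (Suc m) = (- ((-1) ^ m)) * (pochhammer ?a m * of_nat (r1 - s + 1 + m)) / (falling ?b m * of_nat (n - r1 - m))"
    unfolding lamc_def by (simp only: pochhammer_Suc falling_Suc a b power_Suc mult_minus1)
  show ?thesis unfolding L1 L2 by (rule key[OF B F])
qed

lemma rec_scaled:
  assumes sr1: "s \<le> r1" and sn: "s \<le> n - r1"
  shows "\<forall>m<s. of_nat (r1 - s + 1 + m) * (c * lamc n r1 s m) + of_nat (n - r1 - m) * (c * lamc n r1 s (Suc m)) = 0"
proof (intro allI impI)
  fix m assume "m < s"
  from lamc_rec[OF sr1 sn this] show "of_nat (r1 - s + 1 + m) * (c * lamc n r1 s m) + of_nat (n - r1 - m) * (c * lamc n r1 s (Suc m)) = 0"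
    by (metis (no_types, lifting) distrib_left mult.left_commute mult_zero_right)
qed

lemma poly_Pp: "poly (Pp n r1 r2 s) t = inverse (of_nat (r2 choose s)) *
   (\<Sum>j\<le>s. (t gchoose j) * ((of_nat r2 - t) gchoose (s - j)) * lamc n r1 s j)"
  by (simp add: Pp_def poly_sum poly_pgb mult_ac)

lemma poly_Pp_nat:
  assumes "t \<le> r2"
  shows "poly (Pp n r1 r2 s) (of_nat t) = (\<Sum>j\<le>s. of_nat ((t choose j) * ((r2 - t) choose (s - j))) * (inverse (of_nat (r2 choose s)) * lamc n r1 s j))"
  using assms by (simp add: poly_Pp sum_distrib_left binomial_gbinomial of_nat_diff mult_ac)

lemma lamc0: "lamc n r1 s 0 = 1"
  by (simp add: lamc_def falling_def)

lemma poly_Pp_0: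
  assumes "s \<le> r2"
  shows "poly (Pp n r1 r2 s) 0 = 1"
proof -
  have "(\<Sum>j\<le>s. (0 gchoose j) * ((of_nat r2 - 0) gchoose (s - j)) * lamc n r1 s j)
      = (\<Sum>j\<le>s. if j = 0 then (of_nat r2 gchoose s) else (0::complex))"
    by (rule sum.cong) (auto simp: gbinomial_0_left lamc0)
  also have "\<dots> = of_nat (r2 choose s)" by (simp add: binomial_gbinomial)
  finally show ?thesis using assms by (simp add: poly_Pp)
qed

lemma poly_Pp_diag:
  assumes "j \<le> s"
  shows "poly (Pp n r1 s s) (of_nat j) = lamc n r1 s j"
proof -
  have "poly (Pp n r1 s s) (of_nat j) = (\<Sum>i\<le>s. of_nat ((j choose i) * ((s - j) choose (s - i))) * (inverse (of_nat (s choose s)) * lamc n r1 s i))"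
    using assms by (rule poly_Pp_nat)
  also have "\<dots> = (\<Sum>i\<le>s. if i = j then lamc n r1 s i else 0)"
  proof (rule sum.cong)
    fix i assume i: "i \<in> {..s}"
    show "of_nat ((j choose i) * ((s - j) choose (s - i))) * (inverse (of_nat (s choose s)) * lamc n r1 s i)
        = (if i = j then lamc n r1 s i else 0)"
    proof (cases "i = j")
      case False
      then have "(j choose i) * ((s - j) choose (s - i)) = 0"
        using i assms by (cases "i < j") auto
      then show ?thesis using False by simp
    qed simp
  qed simp
  also have "\<dots> = lamc n r1 s j" using assms by simp
  finally show ?thesis .
qed

lemma coeff_Pp:
  "coeff (Pp n r1 r2 s) s = inverse (of_nat (r2 choose s)) *
     (\<Sum>j\<le>s. lamc n r1 s j * (1 / fact j * ((-1) ^ (s - j) / fact (s - j))))"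
proof -
  have "coeff (pgb 0 1 j * pgb (of_nat r2) (-1) (s - j)) s = 1 / fact j * ((-1) ^ (s - j) / fact (s - j))"
    if "j \<le> s" for j
  proof -
    have "coeff (pgb 0 1 j * pgb (of_nat r2) (-1) (s - j)) (degree (pgb 0 1 j) + degree (pgb (of_nat r2) (-1) (s - j)))
       = coeff (pgb 0 1 j) (degree (pgb 0 1 j)) * coeff (pgb (of_nat r2) (-1) (s - j)) (degree (pgb (of_nat r2) (-1) (s - j)))"
      by (rule coeff_mult_degree_sum)
    then show ?thesis using that by (simp add: pgb_degree pgb_lead)
  qed
  then show ?thesis by (simp add: Pp_def coeff_sum)
qed

lemma coeff_Pp_nz:
  assumes sr1: "s \<le> r1" and sn: "s \<le> n - r1" and sr2: "s \<le> r2"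
  shows "coeff (Pp n r1 r2 s) s \<noteq> 0"
proof -
  define x where "x j = real (pochhammer (r1 - s + 1) j) / (real (\<Prod>i<j. n - r1 - i) * (fact j * fact (s - j)))" for j
  have xpos: "x j > 0" if "j \<le> s" for j
  proof -
    have "pochhammer (r1 - s + 1) j > 0" by (rule pochhammer_pos) simp
    then have p1: "real (pochhammer (r1 - s + 1) j) > 0" by (metis of_nat_0_less_iff)
    have "(\<Prod>i<j. n - r1 - i) > 0" using that sn by (auto intro!: prod_pos)
    then have p2: "real (\<Prod>i<j. n - r1 - i) > 0" by (metis of_nat_0_less_iff)
    show ?thesis unfolding x_def by (intro divide_pos_pos mult_pos_pos p1 p2) simp_all
  qed
  have trm: "lamc n r1 s j * (1 / fact j * ((-1) ^ (s - j) / fact (s - j))) = (-1) ^ s * of_real (x j)"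
    if j: "j \<le> s" for j
  proof -
    have a: "(of_nat r1 - of_nat s + 1 :: complex) = of_nat (r1 - s + 1)" using sr1 by (simp add: of_nat_diff)
    have F: "falling (of_nat (n - r1)) j = of_nat (\<Prod>i<j. n - r1 - i)" using j sn by (intro falling_nat) simp
    have pm: "(-1::complex) ^ j * (-1) ^ (s - j) = (-1) ^ s" using j by (simp add: power_add[symmetric])
    have "lamc n r1 s j * (1 / fact j * ((-1) ^ (s - j) / fact (s - j)))
        = ((-1) ^ j * (-1) ^ (s - j)) * (of_nat (pochhammer (r1 - s + 1) j) / (of_nat (\<Prod>i<j. n - r1 - i) * (fact j * fact (s - j))))"
      unfolding lamc_def a F pochhammer_of_nat by (simp add: field_simps)
    also have "\<dots> = (-1) ^ s * of_real (x j)"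
      unfolding pm x_def by (simp add: of_real_divide)
    finally show ?thesis .
  qed
  have "(\<Sum>j\<le>s. lamc n r1 s j * (1 / fact j * ((-1) ^ (s - j) / fact (s - j)))) = (-1) ^ s * of_real (\<Sum>j\<le>s. x j)"
  proof -
    have "(\<Sum>j\<le>s. lamc n r1 s j * (1 / fact j * ((-1) ^ (s - j) / fact (s - j)))) = (\<Sum>j\<le>s. (-1) ^ s * of_real (x j))"
      by (rule sum.cong[OF refl], rule trm) simp
    also have "\<dots> = (-1) ^ s * of_real (\<Sum>j\<le>s. x j)" by (simp add: sum_distrib_left)
    finally show ?thesis .
  qed
  moreover have "(\<Sum>j\<le>s. x j) > 0" by (rule sum_pos) (use xpos in auto)
  then have "complex_of_real (\<Sum>j\<le>s. x j) \<noteq> 0" by (simp only: of_real_eq_0_iff)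
  moreover have "(of_nat (r2 choose s) :: complex) \<noteq> 0" using sr2 by simp
  ultimately show ?thesis unfolding coeff_Pp by simp
qed

lemma degree_Pp:
  assumes sr1: "s \<le> r1" and sn: "s \<le> n - r1" and sr2: "s \<le> r2"
  shows "degree (Pp n r1 r2 s) = s"
proof (rule antisym)
  show "degree (Pp n r1 r2 s) \<le> s" unfolding Pp_def
  proof (rule order.trans[OF degree_smult_le], rule degree_sum_le)
    fix j assume j: "j \<in> {..s}"
    have "degree (pgb 0 1 j * pgb (of_nat r2) (-1) (s - j)) \<le> degree (pgb 0 1 j) + degree (pgb (of_nat r2) (-1) (s - j))"
      by (rule degree_mult_le)
    also have "\<dots> = s" using j by (simp add: pgb_degree)
    finally show "degree (smult (lamc n r1 s j) (pgb 0 1 j * pgb (of_nat r2) (-1) (s - j))) \<le> s"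
      by (rule order.trans[OF degree_smult_le])
  qed simp
  show "s \<le> degree (Pp n r1 r2 s)" by (rule le_degree) (rule coeff_Pp_nz[OF assms])
qed

lemma Pp_ok:
  assumes sr1: "s \<le> r1" and sn: "s \<le> n - r1"
  shows "kernel_ok n r1 r2 s (\<lambda>k. poly (Pp n r1 r2 s) (of_nat k))"
  by (rule comp_ok[OF sr1 sn rec_scaled[OF sr1 sn, of "inverse (of_nat (r2 choose s))"]])
     (simp add: poly_Pp_nat)

lemma sum_sq_zero:
  fixes f :: "'a \<Rightarrow> complex"
  assumes "finite S" "(\<Sum>x\<in>S. f x * cnj (f x)) = 0"
  shows "\<forall>x\<in>S. f x = 0"
proof -
  have "(\<Sum>x\<in>S. f x * cnj (f x)) = of_real (\<Sum>x\<in>S. (norm (f x))\<^sup>2)"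
    by (simp only: of_real_sum complex_norm_square)
  then have "(\<Sum>x\<in>S. (norm (f x))\<^sup>2) = 0" using assms(2) by (metis of_real_eq_0_iff)
  then have "\<forall>x\<in>S. (norm (f x))\<^sup>2 = 0" using sum_nonneg_eq_0_iff[OF assms(1), of "\<lambda>x. (norm (f x))\<^sup>2"] by simp
  then show ?thesis by simp
qed

lemma Nfun_facts:
  assumes "s \<le> Nfun n r1 r2"
  shows "s \<le> r1" "s \<le> n - r1" "s \<le> r2" "s \<le> n - r2"
  using assms by (auto simp: Nfun_def)

lemma uniq:
  assumes N: "s \<le> Nfun n r1 r2" and r1n: "r1 \<le> n" and r2n: "r2 \<le> n"
    and dp: "degree p = s" and p0: "poly p 0 = 1"
    and ok: "kernel_ok n r1 r2 s ker" and agree: "\<forall>k\<in>kdom n r1 r2. ker k = poly p (of_nat k)"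
  shows "p = Pp n r1 r2 s"
proof -
  note NF = Nfun_facts[OF N]
  let ?P = "Pp n r1 r2 s"
  have dP: "degree ?P = s" by (rule degree_Pp) (use NF in auto)
  have P0: "poly ?P 0 = 1" by (rule poly_Pp_0) (use NF in auto)
  show ?thesis
  proof (cases "s = 0")
    case True
    have "p = [:poly p 0:]" using dp True by (metis degree_0_id pCons_0_0 poly_0_coeff_0)
    moreover have "?P = [:poly ?P 0:]" using dP True by (metis degree_0_id pCons_0_0 poly_0_coeff_0)
    ultimately show ?thesis using p0 P0 by simp
  next
    case False
    then have s: "s > 0" by simp
    have lc: "coeff ?P s \<noteq> 0" by (rule coeff_Pp_nz) (use NF in auto)
    define c where "c = coeff p s / coeff ?P s"
    define g where "g = p - smult c ?P"
    have dg: "degree g \<le> s - 1"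
    proof (rule degree_le, intro allI impI)
      fix i assume i: "s - 1 < i"
      show "coeff g i = 0"
      proof (cases "i = s")
        case True then show ?thesis using lc by (simp add: g_def c_def)
      next
        case False
        then have "i > s" using i s by simp
        then show ?thesis using dp dP by (simp add: g_def coeff_eq_0)
      qed
    qed
    have "r2 \<le> card {..<n}" using r2n by simp
    then obtain x2 where x2s: "x2 \<subseteq> {..<n}" "card x2 = r2" "finite x2" by (rule obtain_subset_with_card_n)
    then have x2: "x2 \<in> Xr n r2" by (simp add: Xr_def)
    define g' where "g' = pcompose g [:of_nat r2, -1:]"
    have dg': "degree g' \<le> s - 1" using dg by (simp add: g'_def degree_pcompose)
    obtain a where a: "\<forall>x. poly g' x = (\<Sum>k\<le>s - 1. a k * (x gchoose k))"
      using newton_poly[OF dg'] by blast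
    have gx: "poly g (of_nat (card (x2 - x1))) = (\<Sum>k\<le>s - 1. a k * of_nat (card (x1 \<inter> x2) choose k))"
      if x1: "x1 \<in> Xr n r1" for x1
    proof -
      have "card (x2 - x1) = r2 - card (x1 \<inter> x2)" using card_diff_int[OF x2s(3), of x1] x2s by (simp add: Int_commute)
      moreover have "card (x1 \<inter> x2) \<le> r2" using card_mono[OF x2s(3), of "x1 \<inter> x2"] x2s by auto
      ultimately have "(of_nat (card (x2 - x1)) :: complex) = of_nat r2 + of_nat (card (x1 \<inter> x2)) * (-1)"
        by (simp add: of_nat_diff)
      then have "poly g (of_nat (card (x2 - x1))) = poly g' (of_nat (card (x1 \<inter> x2)))"
        by (simp add: g'_def poly_pcompose)
      then show ?thesis using a by (simp add: binomial_gbinomial)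
    qed
    define m where "m = (\<lambda>x1. if x1 \<in> Xr n r1 then (\<Sum>k\<le>s - 1. cnj (a k) * of_nat (card (x1 \<inter> x2) choose k)) else 0)"
    have mM: "m \<in> Mr n r1 (s - 1)" unfolding m_def by (rule PolyM) (use NF in auto)
    have mx: "m x1 = cnj (poly g (of_nat (card (x2 - x1))))" if "x1 \<in> Xr n r1" for x1
      using that gx[OF that] by (simp add: m_def)
    have mL: "m \<in> L2r n r1" using mM Mr_L2r by blast
    have morth: "\<forall>\<phi>\<in>Vr n r1 s. inner_r n r1 m \<phi> = 0"
    proof
      fix \<phi> assume "\<phi> \<in> Vr n r1 s"
      then have "inner_r n r1 \<phi> m = 0" using mM s by (simp add: Vr_def)
      then show "inner_r n r1 m \<phi> = 0" by (simp add: inner_cnj[of n r1 m \<phi>])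
    qed
    have k1: "kernel_op n r1 r2 ker m = (\<lambda>_. 0)" using ok mL morth by (simp add: kernel_ok_def)
    have k2: "kernel_op n r1 r2 (\<lambda>k. poly ?P (of_nat k)) m = (\<lambda>_. 0)"
      using Pp_ok[of s r1 n r2] NF mL morth by (simp add: kernel_ok_def)
    have e1: "(\<Sum>x1\<in>Xr n r1. poly p (of_nat (card (x2 - x1))) * m x1) = 0"
    proof -
      have "(\<Sum>x1\<in>Xr n r1. ker (card (x2 - x1)) * m x1) = 0"
        using fun_cong[OF k1, of x2] x2 by (simp add: kernel_op_def)
      moreover have "(\<Sum>x1\<in>Xr n r1. ker (card (x2 - x1)) * m x1) = (\<Sum>x1\<in>Xr n r1. poly p (of_nat (card (x2 - x1))) * m x1)"
        by (rule sum.cong) (use agree kdom_mem x2 in auto)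
      ultimately show ?thesis by simp
    qed
    have e2: "(\<Sum>x1\<in>Xr n r1. poly ?P (of_nat (card (x2 - x1))) * m x1) = 0"
      using fun_cong[OF k2, of x2] x2 by (simp add: kernel_op_def)
    have "(\<Sum>x1\<in>Xr n r1. poly g (of_nat (card (x2 - x1))) * m x1)
        = (\<Sum>x1\<in>Xr n r1. poly p (of_nat (card (x2 - x1))) * m x1) - c * (\<Sum>x1\<in>Xr n r1. poly ?P (of_nat (card (x2 - x1))) * m x1)"
      by (simp add: g_def algebra_simps sum_subtractf sum_distrib_left)
    also have "\<dots> = 0" using e1 e2 by simp
    finally have "(\<Sum>x1\<in>Xr n r1. poly g (of_nat (card (x2 - x1))) * cnj (poly g (of_nat (card (x2 - x1))))) = 0"
      using mx by simp
    then have gz: "\<forall>x1\<in>Xr n r1. poly g (of_nat (card (x2 - x1))) = 0"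
      using sum_sq_zero[OF Xr_fin, of "\<lambda>x1. poly g (of_nat (card (x2 - x1)))"] by simp
    have "g = 0"
    proof (rule zero_poly_nat[of "kdom n r1 r2"])
      show "finite (kdom n r1 r2)" by (simp add: kdom_def)
      show "degree g < card (kdom n r1 r2)" using dg kdom_card[OF N r1n r2n] s by simp
      show "\<forall>u\<in>kdom n r1 r2. poly g (of_nat u) = 0"
      proof
        fix u assume "u \<in> kdom n r1 r2"
        then obtain x1 where "x1 \<in> Xr n r1" "card (x2 - x1) = u" using kdom_realize[OF x2 _ r1n] by blast
        then show "poly g (of_nat u) = 0" using gz by auto
      qed
    qed
    then have pc: "p = smult c ?P" by (simp add: g_def)
    then have "c = 1" using p0 P0 by (metis mult.right_neutral poly_smult)
    then show ?thesis using pc by simp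
  qed
qed

lemma lambda_poly_eq:
  assumes N: "s \<le> Nfun n r1 r2" and r1n: "r1 \<le> n" and r2n: "r2 \<le> n"
  shows "lambda_poly n r1 r2 s = Pp n r1 r2 s"
  unfolding lambda_poly_def
proof (rule the_equality)
  note NF = Nfun_facts[OF N]
  show "degree (Pp n r1 r2 s) = s \<and> poly (Pp n r1 r2 s) 0 = 1 \<and>
    (\<exists>ker. kernel_ok n r1 r2 s ker \<and> (\<forall>k\<in>kdom n r1 r2. ker k = poly (Pp n r1 r2 s) (of_nat k)))"
  proof (intro conjI exI)
    show "degree (Pp n r1 r2 s) = s" by (rule degree_Pp) (use NF in auto)
    show "poly (Pp n r1 r2 s) 0 = 1" by (rule poly_Pp_0) (use NF in auto)
    show "kernel_ok n r1 r2 s (\<lambda>k. poly (Pp n r1 r2 s) (of_nat k))" by (rule Pp_ok) (use NF in auto)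
  qed simp
next
  fix p assume "degree p = s \<and> poly p 0 = 1 \<and>
    (\<exists>ker. kernel_ok n r1 r2 s ker \<and> (\<forall>k\<in>kdom n r1 r2. ker k = poly p (of_nat k)))"
  then show "p = Pp n r1 r2 s" using uniq[OF N r1n r2n] by blast
qed

theorem lemma1:
  fixes n r1 r2 s :: nat
  assumes "n \<ge> 1" and "r1 \<le> n" and "r2 \<le> n" and "s \<le> Nfun n r1 r2"
  shows "(\<forall>j\<le>s. lam n r1 s s (of_nat j) =
            (-1) ^ j * pochhammer (of_nat r1 - of_nat s + 1) j / falling (of_nat (n - r1)) j)
       \<and> (\<forall>t::complex. lam n r1 r2 s t =
            inverse (of_nat (r2 choose s)) *
            (\<Sum>j\<le>s. (t gchoose j) * ((of_nat r2 - t) gchoose (s - j)) * lam n r1 s s (of_nat j)))"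
proof -
  note NF = Nfun_facts[OF assms(4)]
  have Ns: "s \<le> Nfun n r1 s" using NF by (simp add: Nfun_def)
  have sn: "s \<le> n" using NF by simp
  have LS: "lam n r1 s s t = poly (Pp n r1 s s) t" for t
    by (simp add: lam_def lambda_poly_eq[OF Ns assms(2) sn])
  have diag: "lam n r1 s s (of_nat j) = lamc n r1 s j" if "j \<le> s" for j
    using that by (simp add: LS poly_Pp_diag)
  have L2: "lam n r1 r2 s t = poly (Pp n r1 r2 s) t" for t
    by (simp add: lam_def lambda_poly_eq[OF assms(4) assms(2) assms(3)])
  show ?thesis
  proof (intro conjI allI impI)
    fix j assume "j \<le> s"
    then show "lam n r1 s s (of_nat j) = (-1) ^ j * pochhammer (of_nat r1 - of_nat s + 1) j / falling (of_nat (n - r1)) j"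
      by (simp add: diag lamc_def)
  next
    fix t :: complex
    have "(\<Sum>j\<le>s. (t gchoose j) * ((of_nat r2 - t) gchoose (s - j)) * lam n r1 s s (of_nat j))
        = (\<Sum>j\<le>s. (t gchoose j) * ((of_nat r2 - t) gchoose (s - j)) * lamc n r1 s j)"
      by (rule sum.cong) (simp_all add: diag)
    then show "lam n r1 r2 s t = inverse (of_nat (r2 choose s)) *
            (\<Sum>j\<le>s. (t gchoose j) * ((of_nat r2 - t) gchoose (s - j)) * lam n r1 s s (of_nat j))"
      by (simp add: L2 poly_Pp)
  qed
qed

end
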